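(* For every integer $n\ge2$, \[ Q_n(x)=\left(\frac{1+\sqrt{5+4x}}2\right)^n+\left(\frac{1-\sqrt{5+4x}}2\right)^n . \]
   Context: For $n\ge1$ let $\Xi_n$ be the poset on $\{x_1,\dots,x_n\}$ whose cover relations are exactly: $x_2\prec x_1$, $x_3\prec x_2$, and for $3\le i\le n-1$, $x_i\prec x_{i+1}$ if $i$ is odd and $x_{i+1}\prec x_i$ if $i$ is even (so $x_1>x_2>x_3<x_4>x_5<\cdots$). A filter of a poset is an up-closed subset. The matchable Lucas cube $\Omega_n$ is the graph whose vertices are the filters of $\Xi_n$, two filters adjacent iff one is obtained from the other by deleting a single element. $q_{n,k}$ denotes the number of induced subgraphs of $\Omega_n$ isomorphic to the $k$-dimensional hypercube, and $Q_n(x)=\sum_{k\ge0}q_{n,k}x^k$ is the cube polynomial of $\Omega_n$. *)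

theory Defs
  imports Complex_Main
begin

text \<open>Cover relations of the poset Xi_n on the elements x_1,...,x_n (encoded as the
naturals 1..n).  xi_cover n a b means x_a is covered by x_b, i.e. x_a \<prec> x_b.\<close>
definition xi_cover :: "nat \<Rightarrow> nat \<Rightarrow> nat \<Rightarrow> bool" where
  "xi_cover n a b \<longleftrightarrow>
     (n \<ge> 2 \<and> a = 2 \<and> b = 1) \<or>
     (n \<ge> 3 \<and> a = 3 \<and> b = 2) \<or>
     (\<exists>i. 3 \<le> i \<and> i \<le> n - 1 \<and>
        ((odd i \<and> a = i \<and> b = Suc i) \<or> (even i \<and> a = Suc i \<and> b = i)))"

definition xi_le :: "nat \<Rightarrow> nat \<Rightarrow> nat \<Rightarrow> bool" where
  "xi_le n a b \<longleftrightarrow> a \<in> {1..n} \<and> b \<in> {1..n} \<and> (xi_cover n)\<^sup>*\<^sup>* a b"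

definition xi_filters :: "nat \<Rightarrow> nat set set" where
  "xi_filters n = {F. F \<subseteq> {1..n} \<and> (\<forall>a\<in>F. \<forall>b. xi_le n a b \<longrightarrow> b \<in> F)}"

definition omega_adj :: "nat \<Rightarrow> nat set \<Rightarrow> nat set \<Rightarrow> bool" where
  "omega_adj n F G \<longleftrightarrow> F \<in> xi_filters n \<and> G \<in> xi_filters n \<and>
     ((\<exists>x\<in>F. G = F - {x}) \<or> (\<exists>x\<in>G. F = G - {x}))"

definition induces_cube :: "nat \<Rightarrow> nat \<Rightarrow> nat set set \<Rightarrow> bool" where
  "induces_cube n k S \<longleftrightarrow> S \<subseteq> xi_filters n \<and>
     (\<exists>f. bij_betw f (Pow {..<k}) S \<and>
        (\<forall>A\<in>Pow {..<k}. \<forall>B\<in>Pow {..<k}.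
            omega_adj n (f A) (f B) \<longleftrightarrow> card ((A - B) \<union> (B - A)) = 1))"

definition q_count :: "nat \<Rightarrow> nat \<Rightarrow> nat" where
  "q_count n k = card {S. induces_cube n k S}"

text \<open>Cube polynomial; q_count n k = 0 once 2^k exceeds the number of vertices,
so summing up to the number of vertices covers all nonzero terms.\<close>
definition cube_poly :: "nat \<Rightarrow> complex \<Rightarrow> complex" where
  "cube_poly n x = (\<Sum>k\<le>card (xi_filters n). of_nat (q_count n k) * x ^ k)"

end

theory Submission
  imports Defs
begin

definition sd :: "'a set \<Rightarrow> 'a set \<Rightarrow> 'a set" where "sd A B = (A - B) \<union> (B - A)"

lemma sd_assoc: "sd (sd A B) C = sd A (sd B C)" by (auto simp: sd_def)
lemma sd_comm: "sd A B = sd B A" by (auto simp: sd_def)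
lemma sd_self[simp]: "sd A A = {}" by (auto simp: sd_def)
lemma sd_empty[simp]: "sd A {} = A" "sd {} A = A" by (auto simp: sd_def)
lemma sd_inv: "sd A (sd A B) = B" by (auto simp: sd_def)

lemma sd_two:
  assumes "sd Y (sd X {a}) = {c}" "sd Y (sd X {b}) = {d}" "a \<noteq> b"
  shows "Y = X \<or> Y = sd X {a,b}"
proof -
  define Z where "Z = sd Y X"
  have 1: "sd Z {a} = {c}" using assms(1) by (simp add: Z_def sd_assoc)
  have 2: "sd Z {b} = {d}" using assms(2) by (simp add: Z_def sd_assoc)
  have Za: "Z = sd {c} {a}" using 1 by (metis sd_assoc sd_self sd_empty(1))
  have Zb: "Z = sd {d} {b}" using 2 by (metis sd_assoc sd_self sd_empty(1))
  have "Z = {} \<or> Z = {a,b}"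
  proof (cases "c = a")
    case True then show ?thesis using Za by simp
  next
    case False
    then have "Z = {a,c}" using Za by (auto simp: sd_def)
    moreover have "d \<noteq> b" using Zb \<open>Z = {a,c}\<close> by (auto simp: sd_def)
    then have "Z = {b,d}" using Zb by (auto simp: sd_def)
    ultimately show ?thesis using assms(3) by auto
  qed
  moreover have "Y = sd Z X" by (simp add: Z_def sd_assoc)
  ultimately show ?thesis by (auto simp: sd_comm)
qed

lemma cover_range:
  assumes "xi_cover n a b" shows "a \<in> {1..n} \<and> b \<in> {1..n} \<and> a \<noteq> b"
proof -
  from assms consider "n \<ge> 2 \<and> a = 2 \<and> b = 1" | "n \<ge> 3 \<and> a = 3 \<and> b = 2"
    | i where "3 \<le> i" "i \<le> n - 1" "(odd i \<and> a = i \<and> b = Suc i) \<or> (even i \<and> a = Suc i \<and> b = i)"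
    unfolding xi_cover_def by blast
  then show ?thesis
  proof cases
    case 3 then show ?thesis by auto
  qed auto
qed

lemma filters_local:
  "F \<in> xi_filters n \<longleftrightarrow> F \<subseteq> {1..n} \<and> (\<forall>a b. xi_cover n a b \<longrightarrow> a \<in> F \<longrightarrow> b \<in> F)"
proof
  assume h: "F \<in> xi_filters n"
  have "xi_le n a b" if "xi_cover n a b" for a b
    using cover_range[OF that] that unfolding xi_le_def by auto
  moreover have "F \<subseteq> {1..n}" "\<And>a b. a \<in> F \<Longrightarrow> xi_le n a b \<Longrightarrow> b \<in> F"
    using h unfolding xi_filters_def by blast+
  ultimately show "F \<subseteq> {1..n} \<and> (\<forall>a b. xi_cover n a b \<longrightarrow> a \<in> F \<longrightarrow> b \<in> F)"
    by blast
next
  assume h: "F \<subseteq> {1..n} \<and> (\<forall>a b. xi_cover n a b \<longrightarrow> a \<in> F \<longrightarrow> b \<in> F)"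
  have *: "(xi_cover n)\<^sup>*\<^sup>* a b \<Longrightarrow> a \<in> F \<Longrightarrow> b \<in> F" for a b
    by (induction rule: rtranclp_induct) (use h in auto)
  show "F \<in> xi_filters n" unfolding xi_filters_def xi_le_def
  proof (intro CollectI conjI ballI allI impI)
    show "F \<subseteq> {1..n}" using h by blast
    fix a b assume "a \<in> F" "a \<in> {1..n} \<and> b \<in> {1..n} \<and> (xi_cover n)\<^sup>*\<^sup>* a b"
    then show "b \<in> F" using * by blast
  qed
qed

definition valid :: "nat \<Rightarrow> nat set \<Rightarrow> nat set \<Rightarrow> bool" where
  "valid n F C \<longleftrightarrow> F \<subseteq> {1..n} \<and> C \<subseteq> {1..n} \<and> F \<inter> C = {} \<and>
     (\<forall>a b. xi_cover n a b \<longrightarrow> a \<in> F \<union> C \<longrightarrow> b \<in> F)"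

lemma valid_iff: "valid n F C \<longleftrightarrow> F \<inter> C = {} \<and> (\<forall>D\<subseteq>C. F \<union> D \<in> xi_filters n)"
proof
  assume "valid n F C"
  then have v: "F \<subseteq> {1..n}" "C \<subseteq> {1..n}" "F \<inter> C = {}"
     "\<And>a b. xi_cover n a b \<Longrightarrow> a \<in> F \<union> C \<Longrightarrow> b \<in> F"
    unfolding valid_def by blast+
  have "F \<union> D \<in> xi_filters n" if "D \<subseteq> C" for D
    unfolding filters_local
  proof (intro conjI allI impI)
    show "F \<union> D \<subseteq> {1..n}" using v that by blast
    fix a b assume "xi_cover n a b" "a \<in> F \<union> D"
    then show "b \<in> F \<union> D" using v(4)[of a b] that by blast
  qed
  then show "F \<inter> C = {} \<and> (\<forall>D\<subseteq>C. F \<union> D \<in> xi_filters n)"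
    using v(3) by blast
next
  assume h: "F \<inter> C = {} \<and> (\<forall>D\<subseteq>C. F \<union> D \<in> xi_filters n)"
  have F: "F \<in> xi_filters n" using h by (metis Un_empty_right empty_subsetI)
  have FC: "F \<union> C \<in> xi_filters n" using h by blast
  have c: "F \<union> {c} \<in> xi_filters n" if "c \<in> C" for c using h that by blast
  show "valid n F C" unfolding valid_def
  proof (intro conjI allI impI)
    show "F \<subseteq> {1..n}" "C \<subseteq> {1..n}" using FC unfolding filters_local by auto
    show "F \<inter> C = {}" using h by blast
    fix a b assume ab: "xi_cover n a b" "a \<in> F \<union> C"
    show "b \<in> F"
    proof (cases "a \<in> F")
      case True then show ?thesis using F ab unfolding filters_local by blast
    next
      case False
      then have "a \<in> C" using ab by blast
      then have "b \<in> F \<union> {a}" using c[of a] ab unfolding filters_local by blast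
      then show ?thesis using cover_range[OF ab(1)] by blast
    qed
  qed
qed


lemma sd_l1: "x \<in> F \<Longrightarrow> G = F - {x} \<Longrightarrow> sd F G = {x}" unfolding sd_def by blast
lemma sd_l2: assumes h: "sd F G = {x}" and xF: "x \<in> F" shows "G = F - {x}"
proof -
  have 1: "y \<in> (F - G) \<union> (G - F) \<longleftrightarrow> y = x" for y using h unfolding sd_def by simp
  show ?thesis
  proof (rule set_eqI)
    fix y show "y \<in> G \<longleftrightarrow> y \<in> F - {x}" using 1[of y] 1[of x] xF by blast
  qed
qed
lemma sd_l3: assumes h: "sd F G = {x}" and xF: "x \<notin> F" shows "F = G - {x} \<and> x \<in> G"
proof -
  have "sd G F = {x}" using h by (simp add: sd_comm)
  have 1: "y \<in> (G - F) \<union> (F - G) \<longleftrightarrow> y = x" for y using h unfolding sd_def by blast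
  have "x \<in> G" using 1[of x] xF by blast
  moreover have "F = G - {x}"
  proof (rule set_eqI)
    fix y show "y \<in> F \<longleftrightarrow> y \<in> G - {x}" using 1[of y] 1[of x] xF by blast
  qed
  ultimately show ?thesis by blast
qed
lemma sd_single_iff: "(\<exists>x. sd F G = {x}) \<longleftrightarrow> ((\<exists>x\<in>F. G = F - {x}) \<or> (\<exists>x\<in>G. F = G - {x}))"
proof
  assume "(\<exists>x\<in>F. G = F - {x}) \<or> (\<exists>x\<in>G. F = G - {x})"
  then show "\<exists>x. sd F G = {x}"
  proof
    assume "\<exists>x\<in>F. G = F - {x}"
    then obtain x where "x \<in> F" "G = F - {x}" by blast
    from sd_l1[OF this] show ?thesis by blast
  next
    assume "\<exists>x\<in>G. F = G - {x}"
    then obtain x where "x \<in> G" "F = G - {x}" by blast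
    from sd_l1[OF this] have "sd G F = {x}" .
    then have "sd F G = {x}" by (simp add: sd_comm)
    then show ?thesis by blast
  qed
next
  assume "\<exists>x. sd F G = {x}"
  then obtain x where x: "sd F G = {x}" by blast
  show "(\<exists>x\<in>F. G = F - {x}) \<or> (\<exists>x\<in>G. F = G - {x})"
  proof (cases "x \<in> F")
    case True
    then show ?thesis using sd_l2[OF x] by blast
  next
    case False
    then show ?thesis using sd_l3[OF x] by blast
  qed
qed

lemma omega_adj_iff:
  "omega_adj n F G \<longleftrightarrow> F \<in> xi_filters n \<and> G \<in> xi_filters n \<and> card (sd F G) = 1"
proof -
  have h: "card (sd F G) = 1 \<longleftrightarrow> (\<exists>x. sd F G = {x})"
    using card_1_singleton_iff[of "sd F G"] by (simp only: One_nat_def)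
  show ?thesis unfolding omega_adj_def sd_single_iff[symmetric] by (simp only: h)
qed


lemma sd_empty_iff: "sd A B = {} \<longleftrightarrow> A = B"
proof
  assume "sd A B = {}"
  then have "A - B = {}" "B - A = {}" unfolding sd_def by simp_all
  then show "A = B" by (simp add: set_eq_iff) blast
qed simp

lemma sd_union_disj:
  assumes "X \<subseteq> C" "Y \<subseteq> C" "F \<inter> C = {}"
  shows "sd (F \<union> X) (F \<union> Y) = sd X Y"
proof (rule set_eqI)
  fix z show "z \<in> sd (F \<union> X) (F \<union> Y) \<longleftrightarrow> z \<in> sd X Y"
    unfolding sd_def using assms by blast
qed

lemma valid_finite: "valid n F C \<Longrightarrow> finite C"
  unfolding valid_def by (meson finite_atLeastAtMost finite_subset)

lemma valid_finiteF: "valid n F C \<Longrightarrow> finite F"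
  unfolding valid_def by (meson finite_atLeastAtMost finite_subset)

lemma cube_from_pair:
  assumes v: "valid n F C" and k: "card C = k"
  shows "induces_cube n k ((\<lambda>D. F \<union> D) ` Pow C)"
proof -
  have fin: "finite C" using valid_finite[OF v] .
  obtain g where g0: "bij_betw g {0..<card C} C" using ex_bij_betw_nat_finite[OF fin] by blast
  then have g: "bij_betw g {..<k} C" using k by (simp add: lessThan_atLeast0)
  have disj: "F \<inter> C = {}" using v unfolding valid_def by blast
  have filt: "\<And>D. D \<subseteq> C \<Longrightarrow> F \<union> D \<in> xi_filters n" using v valid_iff by blast
  define f where "f A = F \<union> g ` A" for A
  have gimgC: "g ` {..<k} = C" using g unfolding bij_betw_def by blast
  have gimg: "g ` A \<subseteq> C" if "A \<subseteq> {..<k}" for A using gimgC that by blast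
  have inj: "inj_on g {..<k}" using g bij_betw_def by blast
  have sdf: "sd (f A) (f B) = g ` (sd A B)" if "A \<subseteq> {..<k}" "B \<subseteq> {..<k}" for A B
  proof -
    have "sd (f A) (f B) = sd (g`A) (g`B)" unfolding f_def
      by (rule sd_union_disj[OF gimg[OF that(1)] gimg[OF that(2)] disj])
    also have "\<dots> = g ` (A - B) \<union> g ` (B - A)" unfolding sd_def
      using inj_on_image_set_diff[OF inj, of A B] inj_on_image_set_diff[OF inj, of B A] that by blast
    also have "\<dots> = g ` (sd A B)" unfolding sd_def by (simp add: image_Un)
    finally show ?thesis .
  qed
  have fimg: "f ` Pow {..<k} = (\<lambda>D. F \<union> D) ` Pow C"
  proof -
    have "f ` Pow {..<k} = (\<lambda>D. F \<union> D) ` (image g ` Pow {..<k})"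
      unfolding f_def image_image by simp
    also have "image g ` Pow {..<k} = Pow C" by (rule image_Pow_surj[OF gimgC])
    finally show ?thesis .
  qed
  have finj: "inj_on f (Pow {..<k})"
  proof (rule inj_onI)
    fix A B assume A: "A \<in> Pow {..<k}" and B: "B \<in> Pow {..<k}" and e: "f A = f B"
    have "g ` sd A B = {}" using sdf[of A B] A B e by simp
    then have "sd A B = {}" by simp
    then show "A = B" by (simp add: sd_empty_iff)
  qed
  show ?thesis unfolding induces_cube_def
  proof (intro conjI exI[of _ f] ballI)
    show "(\<lambda>D. F \<union> D) ` Pow C \<subseteq> xi_filters n" using filt by blast
    show "bij_betw f (Pow {..<k}) ((\<lambda>D. F \<union> D) ` Pow C)"
      unfolding bij_betw_def using finj fimg by blast
    fix A B assume A: "A \<in> Pow {..<k}" and B: "B \<in> Pow {..<k}"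
    have fA: "f A \<in> xi_filters n" "f B \<in> xi_filters n" unfolding f_def using filt gimg A B by blast+
    have "card (sd (f A) (f B)) = card (sd A B)"
    proof -
      have "sd A B \<subseteq> {..<k}" using A B unfolding sd_def by blast
      then have "inj_on g (sd A B)" using inj inj_on_subset by blast
      then show ?thesis using sdf[of A B] A B by (simp add: card_image)
    qed
    then show "omega_adj n (f A) (f B) \<longleftrightarrow> card ((A - B) \<union> (B - A)) = 1"
      unfolding omega_adj_iff using fA by (simp add: sd_def)
  qed
qed

lemma sd_disj: "D \<inter> E = {} \<Longrightarrow> sd D E = D \<union> E"
  unfolding sd_def by blast

lemma sd_ins: "a \<notin> D \<Longrightarrow> sd m (insert a D) = sd (sd m D) {a}"
proof -
  assume "a \<notin> D"
  then have "insert a D = sd D {a}" using sd_disj[of D "{a}"] by simp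
  then show ?thesis by (simp add: sd_assoc)
qed

lemma sd_split:
  assumes "D \<subseteq> E" shows "sd m D = (m - E) \<union> sd (m \<inter> E) D"
proof (rule set_eqI)
  fix z show "z \<in> sd m D \<longleftrightarrow> z \<in> (m - E) \<union> sd (m \<inter> E) D"
    unfolding sd_def using assms by blast
qed

lemma sd_Pow:
  assumes "M \<subseteq> E" shows "(\<lambda>D. sd M D) ` Pow E = Pow E"
proof
  show "(\<lambda>D. sd M D) ` Pow E \<subseteq> Pow E" using assms unfolding sd_def by blast
  show "Pow E \<subseteq> (\<lambda>D. sd M D) ` Pow E"
  proof
    fix D assume D: "D \<in> Pow E"
    have "sd M D \<in> Pow E" using D assms unfolding sd_def by blast
    moreover have "D = sd M (sd M D)" by (simp add: sd_inv)
    ultimately show "D \<in> (\<lambda>D. sd M D) ` Pow E" by blast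
  qed
qed

lemma card1_ex: "card X = 1 \<Longrightarrow> \<exists>x. X = {x}"
  using card_1_singleton_iff[of X] by (simp only: One_nat_def)

lemma pair_from_cube:
  assumes "induces_cube n k S"
  shows "\<exists>F C. valid n F C \<and> card C = k \<and> S = (\<lambda>D. F \<union> D) ` Pow C"
proof -
  from assms obtain f where Ssub: "S \<subseteq> xi_filters n" and bij: "bij_betw f (Pow {..<k}) S"
    and adj: "\<forall>A\<in>Pow {..<k}. \<forall>B\<in>Pow {..<k}. omega_adj n (f A) (f B) \<longleftrightarrow> card ((A - B) \<union> (B - A)) = 1"
    unfolding induces_cube_def by blast
  have adj': "card (sd (f A) (f B)) = 1"
    if "A \<subseteq> {..<k}" "B \<subseteq> {..<k}" "card (sd A B) = 1" for A B
  proof -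
    have "omega_adj n (f A) (f B)" using adj that unfolding sd_def by blast
    then show ?thesis unfolding omega_adj_iff by blast
  qed
  have finj: "inj_on f (Pow {..<k})" using bij unfolding bij_betw_def by blast
  have fimg: "f ` Pow {..<k} = S" using bij unfolding bij_betw_def by blast
  define m where "m = f {}"
  have ex: "\<exists>e. sd m (f {i}) = {e}" if "i < k" for i
  proof -
    have "card (sd m (f {i})) = 1" unfolding m_def
      by (rule adj') (use that in \<open>auto simp: sd_def\<close>)
    then show ?thesis by (rule card1_ex)
  qed
  define e where "e i = (SOME e. sd m (f {i}) = {e})" for i
  have e: "sd m (f {i}) = {e i}" if "i < k" for i
    using someI_ex[OF ex[OF that]] unfolding e_def .
  have fi: "f {i} = sd m {e i}" if "i < k" for i
  proof -
    have "f {i} = sd m (sd m (f {i}))" by (simp add: sd_inv)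
    then show ?thesis using e[OF that] by simp
  qed
  have einj: "inj_on e {..<k}"
  proof (rule inj_onI)
    fix i j assume i: "i \<in> {..<k}" and j: "j \<in> {..<k}" and eq: "e i = e j"
    then have "f {i} = f {j}" using fi by simp
    then have "{i} = {j}" using inj_onD[OF finj, of "{i}" "{j}"] i j by simp
    then show "i = j" by simp
  qed
  have main: "f B = sd m (e ` B)" if "B \<subseteq> {..<k}" for B
    using that
  proof (induction "card B" arbitrary: B rule: less_induct)
    case less
    have finB: "finite B" using less.prems finite_subset by blast
    show ?case
    proof (cases "card B \<le> 1")
      case True
      then consider "card B = 0" | "card B = 1" by linarith
      then show ?thesis
      proof cases
        case 1
        then have "B = {}" using finB by simp
        then show ?thesis by (simp add: m_def)
      next
        case 2
        then obtain i where "B = {i}" using card1_ex by blast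
        then show ?thesis using fi less.prems by simp
      qed
    next
      case False
      then have "B \<noteq> {}" by (metis card.empty not_one_le_zero le_numeral_extra(1) zero_le)
      then obtain i where i: "i \<in> B" by blast
      have "card (B - {i}) \<noteq> 0" using False i finB by simp
      then have "B - {i} \<noteq> {}" by (metis card.empty)
      then obtain j where j: "j \<in> B" "j \<noteq> i" by blast
      define B' where "B' = B - {i, j}"
      have sub: "B' \<subseteq> {..<k}" "B - {i} \<subseteq> {..<k}" "B - {j} \<subseteq> {..<k}"
        using less.prems unfolding B'_def by blast+
      have c1: "card (B - {i}) < card B" by (rule card_Diff1_less[OF finB i])
      have c2: "card (B - {j}) < card B" by (rule card_Diff1_less[OF finB j(1)])
      have c3: "card B' < card B" unfolding B'_def
        by (rule psubset_card_mono[OF finB]) (use i in blast)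
      have IH1: "f (B - {i}) = sd m (e ` (B - {i}))" using less.hyps[OF c1 sub(2)] .
      have IH2: "f (B - {j}) = sd m (e ` (B - {j}))" using less.hyps[OF c2 sub(3)] .
      have IH3: "f B' = sd m (e ` B')" using less.hyps[OF c3 sub(1)] .
      define X where "X = sd m (e ` B')"
      have iB': "i \<notin> B'" "j \<notin> B'" unfolding B'_def by blast+
      have ik: "i < k" "j < k" using less.prems i j by blast+
      have ei: "e i \<notin> e ` B'" "e j \<notin> e ` B'"
        using inj_on_image_mem_iff[OF einj] iB' ik sub(1) by blast+
      have eij: "e i \<noteq> e j" using inj_onD[OF einj] ik j(2) by blast
      have "B - {j} = insert i B'" unfolding B'_def using i j by blast
      then have fBj: "f (B - {j}) = sd X {e i}" using IH2 sd_ins[OF ei(1), of m] unfolding X_def by simp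
      have "B - {i} = insert j B'" unfolding B'_def using i j by blast
      then have fBi: "f (B - {i}) = sd X {e j}" using IH1 sd_ins[OF ei(2), of m] unfolding X_def by simp
      have "sd B (B - {j}) = {j}" using j unfolding sd_def by blast
      then have "card (sd (f B) (f (B - {j}))) = 1" using adj'[OF less.prems sub(3)] by simp
      then obtain c where c: "sd (f B) (sd X {e i}) = {c}" using card1_ex fBj by metis
      have "sd B (B - {i}) = {i}" using i unfolding sd_def by blast
      then have "card (sd (f B) (f (B - {i}))) = 1" using adj'[OF less.prems sub(2)] by simp
      then obtain d where d: "sd (f B) (sd X {e j}) = {d}" using card1_ex fBi by metis
      have alt: "f B = X \<or> f B = sd X {e i, e j}" by (rule sd_two[OF c d eij])
      have "B \<noteq> B'" using i iB' by blast
      then have "f B \<noteq> f B'" using inj_onD[OF finj] less.prems sub(1) by blast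
      then have fB: "f B = sd X {e i, e j}" using alt IH3 unfolding X_def by blast
      have "e ` B = e ` B' \<union> {e i, e j}" unfolding B'_def using i j by blast
      moreover have "e ` B' \<inter> {e i, e j} = {}" using ei by simp
      ultimately have "sd (e ` B') {e i, e j} = e ` B" using sd_disj by metis
      then show ?thesis using fB unfolding X_def by (simp add: sd_assoc)
    qed
  qed
  define E where "E = e ` {..<k}"
  have cardE: "card E = k" unfolding E_def using card_image[OF einj] by simp
  have S1: "S = (\<lambda>D. sd m D) ` Pow E"
  proof -
    have "S = f ` Pow {..<k}" using fimg by simp
    also have "\<dots> = (\<lambda>B. sd m (e ` B)) ` Pow {..<k}" using main by (intro image_cong) auto
    also have "\<dots> = (\<lambda>D. sd m D) ` (image e ` Pow {..<k})" by (simp add: image_image)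
    also have "image e ` Pow {..<k} = Pow E" unfolding E_def by (rule image_Pow_surj) simp
    finally show ?thesis .
  qed
  define F where "F = m - E"
  have S2: "S = (\<lambda>D. F \<union> D) ` Pow E"
  proof -
    have "S = (\<lambda>D. F \<union> sd (m \<inter> E) D) ` Pow E"
      unfolding S1 F_def using sd_split by (intro image_cong) auto
    also have "\<dots> = (\<lambda>D. F \<union> D) ` ((\<lambda>D. sd (m \<inter> E) D) ` Pow E)" by (simp add: image_image)
    also have "(\<lambda>D. sd (m \<inter> E) D) ` Pow E = Pow E" by (rule sd_Pow) blast
    finally show ?thesis .
  qed
  have "valid n F E" unfolding valid_iff
  proof (intro conjI allI impI)
    show "F \<inter> E = {}" unfolding F_def by blast
    fix D assume "D \<subseteq> E"
    then have "F \<union> D \<in> S" unfolding S2 by blast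
    then show "F \<union> D \<in> xi_filters n" using Ssub by blast
  qed
  then show ?thesis using cardE S2 by blast
qed


definition PP :: "nat \<Rightarrow> (nat set \<times> nat set) set" where
  "PP n = {(F, C). valid n F C}"

lemma PP_finite: "finite (PP n)"
proof -
  have "PP n \<subseteq> Pow {1..n} \<times> Pow {1..n}" unfolding PP_def valid_def by blast
  then show ?thesis by (rule finite_subset) simp
qed

lemma union_disj_cancel:
  assumes "F \<union> D = F \<union> D'" "F \<inter> D = {}" "F \<inter> D' = {}" shows "D = D'"
proof (rule set_eqI)
  fix z
  have "z \<in> F \<union> D \<longleftrightarrow> z \<in> F \<union> D'" using assms(1) by simp
  moreover have "z \<in> F \<Longrightarrow> z \<notin> D" "z \<in> F \<Longrightarrow> z \<notin> D'" using assms(2,3) by auto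
  ultimately show "z \<in> D \<longleftrightarrow> z \<in> D'" by auto
qed

lemma Inter_cube: "\<Inter>((\<lambda>D. F \<union> D) ` Pow C) = F"
proof
  show "\<Inter>((\<lambda>D. F \<union> D) ` Pow C) \<subseteq> F"
  proof -
    have "F \<in> (\<lambda>D. F \<union> D) ` Pow C" by (rule image_eqI[of _ _ "{}"]) auto
    then show ?thesis by (rule Inter_lower)
  qed
  show "F \<subseteq> \<Inter>((\<lambda>D. F \<union> D) ` Pow C)" by (rule Inter_greatest) auto
qed

lemma Union_cube: "\<Union>((\<lambda>D. F \<union> D) ` Pow C) = F \<union> C"
proof
  show "F \<union> C \<subseteq> \<Union>((\<lambda>D. F \<union> D) ` Pow C)"
  proof -
    have "F \<union> C \<in> (\<lambda>D. F \<union> D) ` Pow C" by blast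
    then show ?thesis by (rule Union_upper)
  qed
  show "\<Union>((\<lambda>D. F \<union> D) ` Pow C) \<subseteq> F \<union> C" by (rule Union_least) auto
qed

lemma q_count_eq: "q_count n k = card {p \<in> PP n. card (snd p) = k}"
proof -
  define \<phi> where "\<phi> p = (\<lambda>D. fst p \<union> D) ` Pow (snd p)" for p :: "nat set \<times> nat set"
  have img: "{S. induces_cube n k S} = \<phi> ` {p \<in> PP n. card (snd p) = k}"
  proof
    show "{S. induces_cube n k S} \<subseteq> \<phi> ` {p \<in> PP n. card (snd p) = k}"
    proof
      fix S assume "S \<in> {S. induces_cube n k S}"
      then have "induces_cube n k S" by simp
      from pair_from_cube[OF this] obtain F C where
        FC: "valid n F C \<and> card C = k \<and> S = (\<lambda>D. F \<union> D) ` Pow C"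
        by (elim exE) (erule that)
      then have "valid n F C" "card C = k" "S = (\<lambda>D. F \<union> D) ` Pow C" by simp_all
      then show "S \<in> \<phi> ` {p \<in> PP n. card (snd p) = k}"
        unfolding \<phi>_def PP_def by (intro image_eqI[of _ _ "(F, C)"]) auto
    qed
    show "\<phi> ` {p \<in> PP n. card (snd p) = k} \<subseteq> {S. induces_cube n k S}"
    proof
      fix S assume "S \<in> \<phi> ` {p \<in> PP n. card (snd p) = k}"
      then obtain F C where "valid n F C" "card C = k" "S = \<phi> (F, C)"
        unfolding PP_def by auto
      then show "S \<in> {S. induces_cube n k S}" unfolding \<phi>_def using cube_from_pair by simp
    qed
  qed
  have inj: "inj_on \<phi> {p \<in> PP n. card (snd p) = k}"
  proof (rule inj_onI)
    fix p q assume p: "p \<in> {p \<in> PP n. card (snd p) = k}" and q: "q \<in> {p \<in> PP n. card (snd p) = k}"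
      and e: "\<phi> p = \<phi> q"
    obtain F C where pFC: "p = (F, C)" by (cases p)
    obtain F' C' where qFC: "q = (F', C')" by (cases q)
    have d: "F \<inter> C = {}" "F' \<inter> C' = {}" using p q pFC qFC unfolding PP_def valid_def by auto
    have "\<Inter>(\<phi> p) = \<Inter>(\<phi> q)" "\<Union>(\<phi> p) = \<Union>(\<phi> q)" using e by simp_all
    then have "F = F'" "F \<union> C = F' \<union> C'" unfolding \<phi>_def pFC qFC fst_conv snd_conv Inter_cube Union_cube
      by simp_all
    then have "C = C'" using d union_disj_cancel by metis
    then show "p = q" using pFC qFC \<open>F = F'\<close> by simp
  qed
  show ?thesis unfolding q_count_def img using card_image[OF inj] .
qed

lemma filters_finite: "finite (xi_filters n)"
proof -
  have "xi_filters n \<subseteq> Pow {1..n}" unfolding xi_filters_def by blast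
  then show ?thesis by (rule finite_subset) simp
qed

lemma PP_bound:
  assumes "p \<in> PP n" shows "card (snd p) \<le> card (xi_filters n)"
proof -
  obtain F C where pFC: "p = (F, C)" by (cases p)
  have v: "valid n F C" using assms pFC unfolding PP_def by simp
  have d: "F \<inter> C = {}" and filt: "\<And>D. D \<subseteq> C \<Longrightarrow> F \<union> D \<in> xi_filters n"
    using v unfolding valid_iff by blast+
  have fin: "finite C" using valid_finite[OF v] .
  have inj: "inj_on (\<lambda>D. F \<union> D) (Pow C)"
  proof (rule inj_onI)
    fix D D' assume DD: "D \<in> Pow C" "D' \<in> Pow C" "F \<union> D = F \<union> D'"
    have "F \<inter> D = {}" "F \<inter> D' = {}" using d DD(1,2) by auto
    then show "D = D'" using union_disj_cancel[OF DD(3)] by blast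
  qed
  have "(\<lambda>D. F \<union> D) ` Pow C \<subseteq> xi_filters n" using filt by blast
  then have "card ((\<lambda>D. F \<union> D) ` Pow C) \<le> card (xi_filters n)"
    by (rule card_mono[OF filters_finite])
  then have "2 ^ card C \<le> card (xi_filters n)" using card_image[OF inj] card_Pow[of C] fin by simp
  moreover have "card C < 2 ^ card C" by (rule less_exp)
  ultimately have "card C \<le> card (xi_filters n)" by linarith
  then show ?thesis using pFC by simp
qed

definition TT :: "nat \<Rightarrow> complex \<Rightarrow> complex" where
  "TT n x = (\<Sum>p\<in>PP n. x ^ card (snd p))"

lemma cube_poly_eq: "cube_poly n x = TT n x"
proof -
  define N where "N = card (xi_filters n)"
  define g where "g p = card (snd p)" for p :: "nat set \<times> nat set"
  have "TT n x = (\<Sum>k\<in>g ` PP n. \<Sum>p\<in>{p \<in> PP n. g p = k}. x ^ g p)"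
    unfolding TT_def g_def by (rule sum.image_gen[OF PP_finite])
  also have "\<dots> = (\<Sum>k\<in>g ` PP n. of_nat (card {p \<in> PP n. g p = k}) * x ^ k)"
  proof (rule sum.cong[OF refl])
    fix k assume "k \<in> g ` PP n"
    have "(\<Sum>p\<in>{p \<in> PP n. g p = k}. x ^ g p) = (\<Sum>p\<in>{p \<in> PP n. g p = k}. x ^ k)"
      by (rule sum.cong) auto
    then show "(\<Sum>p\<in>{p \<in> PP n. g p = k}. x ^ g p) = of_nat (card {p \<in> PP n. g p = k}) * x ^ k"
      by simp
  qed
  also have "\<dots> = (\<Sum>k\<le>N. of_nat (card {p \<in> PP n. g p = k}) * x ^ k)"
  proof (rule sum.mono_neutral_left)
    show "finite {..N}" by simp
    show "g ` PP n \<subseteq> {..N}" using PP_bound unfolding g_def N_def by fastforce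
    show "\<forall>i\<in>{..N} - g ` PP n. of_nat (card {p \<in> PP n. g p = i}) * x ^ i = 0"
    proof
      fix i assume i: "i \<in> {..N} - g ` PP n"
      have "{p \<in> PP n. g p = i} = {}"
      proof (rule ccontr)
        assume "{p \<in> PP n. g p = i} \<noteq> {}"
        then obtain p where "p \<in> PP n" "g p = i" by blast
        then show False using i by blast
      qed
      then have "card {p \<in> PP n. g p = i} = 0" by (simp only: card.empty)
      then show "of_nat (card {p \<in> PP n. g p = i}) * x ^ i = 0" by simp
    qed
  qed
  also have "\<dots> = cube_poly n x"
    unfolding cube_poly_def N_def g_def q_count_eq by simp
  finally show ?thesis by simp
qed


lemma ex_split:
  "(\<exists>i. 3 \<le> i \<and> i \<le> (n::nat) \<and> P i) \<longleftrightarrow> (\<exists>i. 3 \<le> i \<and> i \<le> n - 1 \<and> P i) \<or> (3 \<le> n \<and> P n)"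
proof
  assume "\<exists>i. 3 \<le> i \<and> i \<le> n \<and> P i"
  then obtain i where i: "3 \<le> i" "i \<le> n" "P i" by blast
  show "(\<exists>i. 3 \<le> i \<and> i \<le> n - 1 \<and> P i) \<or> (3 \<le> n \<and> P n)"
  proof (cases "i = n")
    case True then show ?thesis using i by blast
  next
    case False then have "i \<le> n - 1" using i by linarith
    then show ?thesis using i by blast
  qed
next
  assume "(\<exists>i. 3 \<le> i \<and> i \<le> n - 1 \<and> P i) \<or> (3 \<le> n \<and> P n)"
  then show "\<exists>i. 3 \<le> i \<and> i \<le> n \<and> P i"
  proof
    assume "\<exists>i. 3 \<le> i \<and> i \<le> n - 1 \<and> P i"
    then obtain i where "3 \<le> i" "i \<le> n - 1" "P i" by blast
    then have "3 \<le> i \<and> i \<le> n \<and> P i" by linarith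
    then show ?thesis by blast
  next
    assume "3 \<le> n \<and> P n" then show ?thesis by blast
  qed
qed

definition up :: "nat \<Rightarrow> bool" where "up n \<longleftrightarrow> odd n \<and> 3 \<le> n"

lemma cover_Suc:
  assumes "n \<ge> 1"
  shows "xi_cover (Suc n) a b \<longleftrightarrow> xi_cover n a b \<or>
     (if up n then a = n \<and> b = Suc n else a = Suc n \<and> b = n)"
proof -
  define P where "P i \<longleftrightarrow> (odd i \<and> a = i \<and> b = Suc i) \<or> (even i \<and> a = Suc i \<and> b = i)" for i :: nat
  have c: "xi_cover m a b \<longleftrightarrow> (m \<ge> 2 \<and> a = 2 \<and> b = 1) \<or> (m \<ge> 3 \<and> a = 3 \<and> b = 2) \<or>
     (\<exists>i. 3 \<le> i \<and> i \<le> m - 1 \<and> P i)" for m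
    unfolding xi_cover_def P_def by (rule refl)
  have cS: "xi_cover (Suc n) a b \<longleftrightarrow> (Suc n \<ge> 2 \<and> a = 2 \<and> b = 1) \<or> (Suc n \<ge> 3 \<and> a = 3 \<and> b = 2) \<or>
     (\<exists>i. 3 \<le> i \<and> i \<le> n \<and> P i)" unfolding c by simp
  consider "n = 1" | "n = 2" | "n \<ge> 3" using assms by linarith
  then show ?thesis
  proof cases
    case 1
    have "\<not> (\<exists>i. 3 \<le> i \<and> i \<le> n \<and> P i)" "\<not> (\<exists>i. 3 \<le> i \<and> i \<le> n - 1 \<and> P i)" using 1 by auto
    then show ?thesis unfolding cS c using 1 by (auto simp add: up_def)
  next
    case 2
    have "\<not> (\<exists>i. 3 \<le> i \<and> i \<le> n \<and> P i)" "\<not> (\<exists>i. 3 \<le> i \<and> i \<le> n - 1 \<and> P i)" using 2 by auto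
    then show ?thesis unfolding cS c using 2 by (auto simp add: up_def)
  next
    case 3
    have Pn: "P n \<longleftrightarrow> (if up n then a = n \<and> b = Suc n else a = Suc n \<and> b = n)"
      unfolding P_def up_def using 3 by auto
    have cn: "xi_cover n a b \<longleftrightarrow> (a = 2 \<and> b = 1) \<or> (a = 3 \<and> b = 2) \<or> (\<exists>i. 3 \<le> i \<and> i \<le> n - 1 \<and> P i)"
      unfolding c using 3 by simp
    have cSn: "xi_cover (Suc n) a b \<longleftrightarrow> (a = 2 \<and> b = 1) \<or> (a = 3 \<and> b = 2) \<or> (\<exists>i. 3 \<le> i \<and> i \<le> n \<and> P i)"
      unfolding cS using 3 by simp
    have "xi_cover (Suc n) a b \<longleftrightarrow> xi_cover n a b \<or> P n"
      unfolding cSn cn ex_split[of n P] using 3 by blast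
    then show ?thesis unfolding Pn .
  qed
qed

lemma cover_le: "xi_cover n a b \<Longrightarrow> a \<le> n \<and> b \<le> n"
  using cover_range by fastforce

definition newc :: "nat \<Rightarrow> nat set \<Rightarrow> nat set \<Rightarrow> bool" where
  "newc n F C \<longleftrightarrow> (if up n then (n \<in> F \<union> C \<longrightarrow> Suc n \<in> F) else (Suc n \<in> F \<union> C \<longrightarrow> n \<in> F))"

lemma valid_Suc:
  assumes n: "n \<ge> 1"
  shows "valid (Suc n) F C \<longleftrightarrow> valid n (F - {Suc n}) (C - {Suc n}) \<and> F \<subseteq> {1..Suc n} \<and>
     C \<subseteq> {1..Suc n} \<and> F \<inter> C = {} \<and> newc n F C"
proof
  assume v: "valid (Suc n) F C"
  then have v1: "F \<subseteq> {1..Suc n}" "C \<subseteq> {1..Suc n}" "F \<inter> C = {}"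
    and v2: "\<And>a b. xi_cover (Suc n) a b \<Longrightarrow> a \<in> F \<union> C \<Longrightarrow> b \<in> F"
    unfolding valid_def by blast+
  have "valid n (F - {Suc n}) (C - {Suc n})" unfolding valid_def
  proof (intro conjI allI impI)
    show "F - {Suc n} \<subseteq> {1..n}" "C - {Suc n} \<subseteq> {1..n}" using v1 by auto
    show "(F - {Suc n}) \<inter> (C - {Suc n}) = {}" using v1 by blast
    fix a b assume ab: "xi_cover n a b" "a \<in> (F - {Suc n}) \<union> (C - {Suc n})"
    have "xi_cover (Suc n) a b" using cover_Suc[OF n] ab(1) by blast
    then have "b \<in> F" using v2 ab(2) by blast
    moreover have "b \<le> n" using cover_le[OF ab(1)] by blast
    ultimately show "b \<in> F - {Suc n}" by simp
  qed
  moreover have "newc n F C"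
  proof (cases "up n")
    case True
    have "xi_cover (Suc n) n (Suc n)" using cover_Suc[OF n] True by simp
    then show ?thesis unfolding newc_def using True v2 by simp
  next
    case False
    have "xi_cover (Suc n) (Suc n) n" using cover_Suc[OF n] False by simp
    then show ?thesis unfolding newc_def using False v2 by simp
  qed
  ultimately show "valid n (F - {Suc n}) (C - {Suc n}) \<and> F \<subseteq> {1..Suc n} \<and>
     C \<subseteq> {1..Suc n} \<and> F \<inter> C = {} \<and> newc n F C" using v1 by blast
next
  assume h: "valid n (F - {Suc n}) (C - {Suc n}) \<and> F \<subseteq> {1..Suc n} \<and>
     C \<subseteq> {1..Suc n} \<and> F \<inter> C = {} \<and> newc n F C"
  then have h1: "\<And>a b. xi_cover n a b \<Longrightarrow> a \<in> (F - {Suc n}) \<union> (C - {Suc n}) \<Longrightarrow> b \<in> F - {Suc n}"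
    unfolding valid_def by blast
  show "valid (Suc n) F C" unfolding valid_def
  proof (intro conjI allI impI)
    show "F \<subseteq> {1..Suc n}" "C \<subseteq> {1..Suc n}" "F \<inter> C = {}" using h by blast+
    fix a b assume ab: "xi_cover (Suc n) a b" "a \<in> F \<union> C"
    from ab(1) have "xi_cover n a b \<or> (if up n then a = n \<and> b = Suc n else a = Suc n \<and> b = n)"
      using cover_Suc[OF n] by blast
    then show "b \<in> F"
    proof
      assume c: "xi_cover n a b"
      have "a \<le> n" using cover_le[OF c] by blast
      then have "a \<in> (F - {Suc n}) \<union> (C - {Suc n})" using ab(2) by auto
      then show "b \<in> F" using h1[OF c] by blast
    next
      assume c: "if up n then a = n \<and> b = Suc n else a = Suc n \<and> b = n"
      have nc: "newc n F C" using h by blast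
      show "b \<in> F"
      proof (cases "up n")
        case True then show ?thesis using c nc ab(2) unfolding newc_def by auto
      next
        case False then show ?thesis using c nc ab(2) unfolding newc_def by auto
      qed
    qed
  qed
qed


definition st :: "nat \<Rightarrow> nat set \<times> nat set \<Rightarrow> nat" where
  "st m p = (if m \<in> fst p then 1 else if m \<in> snd p then 2 else 0)"

definition ext :: "nat \<Rightarrow> nat \<Rightarrow> nat set \<times> nat set \<Rightarrow> nat set \<times> nat set" where
  "ext n s p = (if s = 1 then insert (Suc n) (fst p) else fst p,
                if s = 2 then insert (Suc n) (snd p) else snd p)"

definition compat :: "nat \<Rightarrow> nat \<Rightarrow> nat set \<times> nat set \<Rightarrow> bool" where
  "compat n s p \<longleftrightarrow> (if up n then (n \<in> fst p \<union> snd p \<longrightarrow> s = 1) else (s \<noteq> 0 \<longrightarrow> n \<in> fst p))"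

definition WW :: "nat \<Rightarrow> complex \<Rightarrow> nat \<Rightarrow> complex" where
  "WW n x s = (\<Sum>p\<in>{p \<in> PP n. st n p = s}. x ^ card (snd p))"

lemma PP_sub: "p \<in> PP n \<Longrightarrow> fst p \<subseteq> {1..n} \<and> snd p \<subseteq> {1..n} \<and> fst p \<inter> snd p = {}"
  unfolding PP_def valid_def by auto

lemma step_sub:
  assumes n: "n \<ge> 1" and s: "s \<le> 2"
  shows "{p \<in> PP (Suc n). st (Suc n) p = s} \<subseteq> ext n s ` {p \<in> PP n. compat n s p}"
proof
  fix p assume p: "p \<in> {p \<in> PP (Suc n). st (Suc n) p = s}"
  obtain F C where pFC: "p = (F, C)" by (cases p)
  have v: "valid (Suc n) F C" and sts: "st (Suc n) (F, C) = s" using p pFC unfolding PP_def by auto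
  from v have vq: "valid n (F - {Suc n}) (C - {Suc n})" and disj: "F \<inter> C = {}" and nc: "newc n F C"
    using valid_Suc[OF n] by blast+
  define q where "q = (F - {Suc n}, C - {Suc n})"
  have qP: "q \<in> PP n" using vq unfolding q_def PP_def by simp
  have sv: "s = (if Suc n \<in> F then 1 else if Suc n \<in> C then 2 else 0)" using sts unfolding st_def by (auto split: if_splits)
  have cq: "compat n s q"
  proof (cases "up n")
    case True
    then have "n \<in> F \<union> C \<longrightarrow> Suc n \<in> F" using nc unfolding newc_def by simp
    then show ?thesis using True sv unfolding compat_def q_def by auto
  next
    case False
    then have "Suc n \<in> F \<union> C \<longrightarrow> n \<in> F" using nc unfolding newc_def by simp
    then show ?thesis using False sv unfolding compat_def q_def by auto
  qed
  have eq: "ext n s q = p"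
  proof (cases "Suc n \<in> F")
    case True
    then have "Suc n \<notin> C" using disj by blast
    then show ?thesis using True sv unfolding ext_def q_def pFC by auto
  next
    case False
    show ?thesis
    proof (cases "Suc n \<in> C")
      case True
      then show ?thesis using False sv unfolding ext_def q_def pFC by auto
    next
      case False2: False
      then show ?thesis using False sv unfolding ext_def q_def pFC by auto
    qed
  qed
  have "q \<in> {p \<in> PP n. compat n s p}" using qP cq by simp
  then show "p \<in> ext n s ` {p \<in> PP n. compat n s p}" by (rule rev_image_eqI) (use eq in simp)
qed

lemma step_sup:
  assumes n: "n \<ge> 1" and s: "s \<le> 2"
  shows "ext n s ` {p \<in> PP n. compat n s p} \<subseteq> {p \<in> PP (Suc n). st (Suc n) p = s}"
proof
  fix p assume "p \<in> ext n s ` {p \<in> PP n. compat n s p}"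
  then obtain q where q: "q \<in> PP n" "compat n s q" and pq: "p = ext n s q" by blast
  obtain F' C' where qFC: "q = (F', C')" by (cases q)
  have v': "valid n F' C'" using q qFC unfolding PP_def by simp
  then have sub: "F' \<subseteq> {1..n}" "C' \<subseteq> {1..n}" "F' \<inter> C' = {}" unfolding valid_def by blast+
  have nF: "Suc n \<notin> F'" "Suc n \<notin> C'" using sub by auto
  define F where "F = (if s = 1 then insert (Suc n) F' else F')"
  define C where "C = (if s = 2 then insert (Suc n) C' else C')"
  have pFC: "p = (F, C)" unfolding pq qFC ext_def F_def C_def by simp
  have r: "F - {Suc n} = F'" "C - {Suc n} = C'" using nF unfolding F_def C_def by auto
  have rng: "F \<subseteq> {1..Suc n}" "C \<subseteq> {1..Suc n}" using sub unfolding F_def C_def by auto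
  have dj: "F \<inter> C = {}" using sub nF unfolding F_def C_def by auto
  have cq: "if up n then (n \<in> F' \<union> C' \<longrightarrow> s = 1) else (s \<noteq> 0 \<longrightarrow> n \<in> F')"
    using q(2) unfolding compat_def qFC by (auto split: if_splits)
  have nc: "newc n F C"
  proof (cases "up n")
    case True
    then have "n \<in> F' \<union> C' \<longrightarrow> s = 1" using cq by simp
    moreover have "n \<in> F \<union> C \<longrightarrow> n \<in> F' \<union> C'" unfolding F_def C_def by auto
    ultimately show ?thesis using True unfolding newc_def F_def by auto
  next
    case False
    then have "s \<noteq> 0 \<longrightarrow> n \<in> F'" using cq by simp
    moreover have "Suc n \<in> F \<union> C \<longrightarrow> s \<noteq> 0" using nF unfolding F_def C_def by auto
    ultimately show ?thesis using False unfolding newc_def F_def by auto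
  qed
  have "valid (Suc n) F C" unfolding valid_Suc[OF n] r using v' rng dj nc by blast
  moreover have "st (Suc n) (F, C) = s"
  proof -
    consider "s = 0" | "s = 1" | "s = 2" using s by linarith
    then show ?thesis
    proof cases
      case 1 then show ?thesis using nF unfolding st_def F_def C_def by simp
    next
      case 2 then show ?thesis unfolding st_def F_def C_def by simp
    next
      case 3 then show ?thesis using nF unfolding st_def F_def C_def by simp
    qed
  qed
  ultimately show "p \<in> {p \<in> PP (Suc n). st (Suc n) p = s}" unfolding pFC PP_def by simp
qed

lemma ext_inj: "inj_on (ext n s) (PP n)"
proof (rule inj_onI)
  fix p q assume p: "p \<in> PP n" and q: "q \<in> PP n" and e: "ext n s p = ext n s q"
  have np: "Suc n \<notin> fst p" "Suc n \<notin> snd p" using PP_sub[OF p] by auto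
  have nq: "Suc n \<notin> fst q" "Suc n \<notin> snd q" using PP_sub[OF q] by auto
  have "fst (ext n s p) - {Suc n} = fst p" "snd (ext n s p) - {Suc n} = snd p"
    using np unfolding ext_def by auto
  moreover have "fst (ext n s q) - {Suc n} = fst q" "snd (ext n s q) - {Suc n} = snd q"
    using nq unfolding ext_def by auto
  ultimately show "p = q" using e by (metis prod.expand)
qed

lemma ext_card:
  assumes "q \<in> PP n" shows "card (snd (ext n s q)) = card (snd q) + (if s = 2 then 1 else 0)"
proof -
  have sub: "snd q \<subseteq> {1..n}" using PP_sub[OF assms] by blast
  then have fin: "finite (snd q)" by (rule finite_subset) simp
  have "Suc n \<notin> snd q" using sub by auto
  then show ?thesis unfolding ext_def using fin by (simp add: card_insert_disjoint)
qed

lemma WW_step: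
  assumes n: "n \<ge> 1" and s: "s \<le> 2"
  shows "WW (Suc n) x s = (if s = 2 then x else 1) * (\<Sum>q\<in>{q \<in> PP n. compat n s q}. x ^ card (snd q))"
proof -
  let ?A = "{q \<in> PP n. compat n s q}"
  have seq: "{p \<in> PP (Suc n). st (Suc n) p = s} = ext n s ` ?A"
    using step_sub[OF n s] step_sup[OF n s] by (rule equalityI)
  have inj: "inj_on (ext n s) ?A" using ext_inj by (rule inj_on_subset) blast
  have "WW (Suc n) x s = (\<Sum>q\<in>?A. x ^ card (snd (ext n s q)))"
    unfolding WW_def seq by (simp add: sum.reindex[OF inj])
  also have "\<dots> = (\<Sum>q\<in>?A. (if s = 2 then x else 1) * x ^ card (snd q))"
  proof (rule sum.cong[OF refl])
    fix q assume "q \<in> ?A"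
    then have "card (snd (ext n s q)) = card (snd q) + (if s = 2 then 1 else 0)"
      using ext_card by blast
    then show "x ^ card (snd (ext n s q)) = (if s = 2 then x else 1) * x ^ card (snd q)"
      by (simp add: power_add mult.commute)
  qed
  also have "\<dots> = (if s = 2 then x else 1) * (\<Sum>q\<in>?A. x ^ card (snd q))"
    by (simp add: sum_distrib_left)
  finally show ?thesis .
qed

lemma TT_split: "TT n x = WW n x 0 + WW n x 1 + WW n x 2"
proof -
  have "TT n x = (\<Sum>s\<in>st n ` PP n. \<Sum>p\<in>{p \<in> PP n. st n p = s}. x ^ card (snd p))"
    unfolding TT_def by (rule sum.image_gen[OF PP_finite])
  also have "\<dots> = (\<Sum>s\<in>{0,1,2}. \<Sum>p\<in>{p \<in> PP n. st n p = s}. x ^ card (snd p))"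
  proof (rule sum.mono_neutral_left)
    show "finite {0::nat,1,2}" by simp
    show "st n ` PP n \<subseteq> {0,1,2}" unfolding st_def by auto
    show "\<forall>i\<in>{0,1,2} - st n ` PP n. (\<Sum>p\<in>{p \<in> PP n. st n p = i}. x ^ card (snd p)) = 0"
    proof
      fix i assume i: "i \<in> {0,1,2} - st n ` PP n"
      have "{p \<in> PP n. st n p = i} = {}"
      proof (rule ccontr)
        assume "{p \<in> PP n. st n p = i} \<noteq> {}"
        then obtain p where "p \<in> PP n" "st n p = i" by blast
        then show False using i by blast
      qed
      then show "(\<Sum>p\<in>{p \<in> PP n. st n p = i}. x ^ card (snd p)) = 0" by (simp only: sum.empty)
    qed
  qed
  also have "\<dots> = WW n x 0 + WW n x 1 + WW n x 2" unfolding WW_def by (simp add: add.assoc)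
  finally show ?thesis .
qed


lemma compat_all_down: "\<not> up n \<Longrightarrow> {q \<in> PP n. compat n 0 q} = PP n"
  unfolding compat_def by auto
lemma compat_all_up: "up n \<Longrightarrow> {q \<in> PP n. compat n 1 q} = PP n"
  unfolding compat_def by auto
lemma compat_down: "\<not> up n \<Longrightarrow> s \<noteq> 0 \<Longrightarrow> {q \<in> PP n. compat n s q} = {q \<in> PP n. st n q = 1}"
  unfolding compat_def st_def by auto
lemma compat_up: "up n \<Longrightarrow> s \<noteq> 1 \<Longrightarrow> {q \<in> PP n. compat n s q} = {q \<in> PP n. st n q = 0}"
  unfolding compat_def st_def by auto

lemma down_steps:
  assumes "n \<ge> 1" "\<not> up n"
  shows "WW (Suc n) x 0 = TT n x" "WW (Suc n) x 1 = WW n x 1" "WW (Suc n) x 2 = x * WW n x 1"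
proof -
  show "WW (Suc n) x 0 = TT n x"
    using WW_step[OF assms(1), of 0 x] compat_all_down[OF assms(2)] unfolding TT_def by simp
  show "WW (Suc n) x 1 = WW n x 1"
    using WW_step[OF assms(1), of 1 x] compat_down[OF assms(2), of 1] unfolding WW_def by simp
  show "WW (Suc n) x 2 = x * WW n x 1"
    using WW_step[OF assms(1), of 2 x] compat_down[OF assms(2), of 2] unfolding WW_def by simp
qed

lemma up_steps:
  assumes "n \<ge> 1" "up n"
  shows "WW (Suc n) x 0 = WW n x 0" "WW (Suc n) x 1 = TT n x" "WW (Suc n) x 2 = x * WW n x 0"
proof -
  show "WW (Suc n) x 1 = TT n x"
    using WW_step[OF assms(1), of 1 x] compat_all_up[OF assms(2)] unfolding TT_def by simp
  show "WW (Suc n) x 0 = WW n x 0"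
    using WW_step[OF assms(1), of 0 x] compat_up[OF assms(2), of 0] unfolding WW_def by simp
  show "WW (Suc n) x 2 = x * WW n x 0"
    using WW_step[OF assms(1), of 2 x] compat_up[OF assms(2), of 2] unfolding WW_def by simp
qed

definition MM :: "nat \<Rightarrow> complex \<Rightarrow> complex" where
  "MM n x = (if up n then WW n x 0 else WW n x 1)"

lemma rec1: assumes "n \<ge> 1" shows "TT (Suc n) x = TT n x + (1 + x) * MM n x"
proof (cases "up n")
  case True
  show ?thesis unfolding TT_split[of "Suc n"] TT_split[of n] up_steps[OF assms True] MM_def
    using True by (simp add: algebra_simps)
next
  case False
  show ?thesis unfolding TT_split[of "Suc n"] TT_split[of n] down_steps[OF assms False] MM_def
    using False by (simp add: algebra_simps)
qed

lemma rec2: assumes "n \<ge> 2" shows "MM (Suc n) x = TT n x"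
proof (cases "up (Suc n)")
  case True
  then have "\<not> up n" unfolding up_def by auto
  then show ?thesis unfolding MM_def using True down_steps(1)[of n x] assms by simp
next
  case False
  then have "up n" unfolding up_def using assms by (cases "n = 2") auto
  then show ?thesis unfolding MM_def using False up_steps(2)[of n x] assms by simp
qed

lemma TT_rec: assumes "n \<ge> 2" shows "TT (Suc (Suc n)) x = TT (Suc n) x + (1 + x) * TT n x"
  using rec1[of "Suc n" x] rec2[OF assms, of x] assms by simp

lemma no_cover1: "\<not> xi_cover 1 a b"
  using cover_range[of 1 a b] by auto

lemma PP1: "PP 1 = {({}, {}), ({1}, {}), ({}, {1})}"
proof -
  have v: "valid 1 F C \<longleftrightarrow> F \<subseteq> {1} \<and> C \<subseteq> {1} \<and> F \<inter> C = {}" for F C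
    unfolding valid_def using no_cover1 by simp
  show ?thesis
  proof (rule set_eqI)
    fix p :: "nat set \<times> nat set"
    obtain F C where pFC: "p = (F, C)" by (cases p)
    have "p \<in> PP 1 \<longleftrightarrow> F \<subseteq> {1} \<and> C \<subseteq> {1} \<and> F \<inter> C = {}" unfolding PP_def pFC v by simp
    also have "\<dots> \<longleftrightarrow> p \<in> {({}, {}), ({1}, {}), ({}, {1})}"
      unfolding pFC subset_singleton_iff by auto
    finally show "p \<in> PP 1 \<longleftrightarrow> p \<in> {({}, {}), ({1}, {}), ({}, {1})}" .
  qed
qed

lemma TT1: "TT 1 x = 2 + x"
  unfolding TT_def PP1 by simp

lemma WW1: "WW 1 x 1 = 1"
proof -
  have "{p \<in> PP 1. st 1 p = 1} = {({1}, {})}" unfolding PP1 st_def by auto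
  then show ?thesis unfolding WW_def by simp
qed

lemma not_up12: "\<not> up 1" "\<not> up 2" unfolding up_def by auto

lemma TT2: "TT 2 x = 3 + 2 * x"
proof -
  have "TT 2 x = TT 1 x + (1 + x) * MM 1 x" using rec1[of 1 x] by (simp add: numeral_2_eq_2)
  then show ?thesis unfolding TT1 MM_def using not_up12 WW1 by (simp add: algebra_simps)
qed

lemma TT3: "TT 3 x = 4 + 3 * x"
proof -
  have "TT 3 x = TT 2 x + (1 + x) * MM 2 x" using rec1[of 2 x] by (simp add: numeral_3_eq_3 numeral_2_eq_2)
  moreover have "MM 2 x = WW 1 x 1" unfolding MM_def using not_up12 down_steps(2)[of 1 x]
    by (simp add: numeral_2_eq_2)
  ultimately show ?thesis unfolding TT2 WW1 by (simp add: algebra_simps)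
qed

definition LL :: "nat \<Rightarrow> complex \<Rightarrow> complex" where
  "LL n x = ((1 + csqrt (5 + 4 * x)) / 2) ^ n + ((1 - csqrt (5 + 4 * x)) / 2) ^ n"

lemma root_eq:
  fixes s x :: complex
  assumes "s ^ 2 = 5 + 4 * x"
  shows "((1 + s) / 2) ^ 2 = (1 + s) / 2 + (1 + x)" "((1 - s) / 2) ^ 2 = (1 - s) / 2 + (1 + x)"
proof -
  have "((1 + s) / 2) ^ 2 = (1 + 2 * s + s ^ 2) / 4" by (simp add: power2_eq_square field_simps)
  also have "\<dots> = (1 + s) / 2 + (1 + x)" unfolding assms by (simp add: field_simps)
  finally show "((1 + s) / 2) ^ 2 = (1 + s) / 2 + (1 + x)" .
  have "((1 - s) / 2) ^ 2 = (1 - 2 * s + s ^ 2) / 4" by (simp add: power2_eq_square field_simps)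
  also have "\<dots> = (1 - s) / 2 + (1 + x)" unfolding assms by (simp add: field_simps)
  finally show "((1 - s) / 2) ^ 2 = (1 - s) / 2 + (1 + x)" .
qed

lemma LL_rec: "LL (Suc (Suc n)) x = LL (Suc n) x + (1 + x) * LL n x"
proof -
  define s where "s = csqrt (5 + 4 * x)"
  have s2: "s ^ 2 = 5 + 4 * x" unfolding s_def by (rule power2_csqrt)
  define a where "a = (1 + s) / 2"
  define b where "b = (1 - s) / 2"
  have a2: "a ^ 2 = a + (1 + x)" and b2: "b ^ 2 = b + (1 + x)"
    using root_eq[OF s2] unfolding a_def b_def by blast+
  have "a ^ Suc (Suc n) = a ^ n * a ^ 2" by (simp add: power_add[symmetric])
  also have "\<dots> = a ^ Suc n + (1 + x) * a ^ n" unfolding a2 by (simp add: algebra_simps)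
  finally have A: "a ^ Suc (Suc n) = a ^ Suc n + (1 + x) * a ^ n" .
  have "b ^ Suc (Suc n) = b ^ n * b ^ 2" by (simp add: power_add[symmetric])
  also have "\<dots> = b ^ Suc n + (1 + x) * b ^ n" unfolding b2 by (simp add: algebra_simps)
  finally have B: "b ^ Suc (Suc n) = b ^ Suc n + (1 + x) * b ^ n" .
  show ?thesis unfolding LL_def s_def[symmetric] a_def[symmetric] b_def[symmetric] A B
    by (simp add: algebra_simps)
qed

lemma LL01: "LL 0 x = 2" "LL 1 x = 1"
  unfolding LL_def by (simp_all add: field_simps)

lemma LL23: "LL 2 x = 3 + 2 * x" "LL 3 x = 4 + 3 * x"
proof -
  have "LL 2 x = LL 1 x + (1 + x) * LL 0 x" using LL_rec[of 0 x] by (simp add: numeral_2_eq_2)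
  then show "LL 2 x = 3 + 2 * x" unfolding LL01 by (simp add: algebra_simps)
  then have "LL 3 x = (3 + 2 * x) + (1 + x) * 1" using LL_rec[of 1 x] LL01
    by (simp add: numeral_3_eq_3 numeral_2_eq_2)
  then show "LL 3 x = 4 + 3 * x" by (simp add: algebra_simps)
qed

lemma TT_LL: "TT (n + 2) x = LL (n + 2) x \<and> TT (n + 3) x = LL (n + 3) x"
proof (induction n)
  case 0
  then show ?case by (simp only: add.left_neutral TT2 TT3 LL23)
next
  case (Suc n)
  have "TT (Suc n + 3) x = TT (Suc n + 2) x + (1 + x) * TT (n + 2) x"
    using TT_rec[of "n + 2" x] by (simp add: numeral_3_eq_3 numeral_2_eq_2)
  moreover have "LL (Suc n + 3) x = LL (Suc n + 2) x + (1 + x) * LL (n + 2) x"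
    using LL_rec[of "n + 2" x] by (simp add: numeral_3_eq_3 numeral_2_eq_2)
  moreover have "TT (Suc n + 2) x = LL (Suc n + 2) x"
  proof -
    have "Suc n + 2 = n + 3" by simp
    then show ?thesis using Suc.IH by (simp only:)
  qed
  ultimately show ?case using Suc.IH by simp
qed

lemma final:
  fixes n :: nat and x :: complex
  assumes "n \<ge> 2"
  shows "cube_poly n x =
    ((1 + csqrt (5 + 4 * x)) / 2) ^ n + ((1 - csqrt (5 + 4 * x)) / 2) ^ n"
proof -
  obtain m where m: "n = m + 2" using assms by (metis add.commute le_add_diff_inverse)
  show ?thesis unfolding cube_poly_eq m using TT_LL[of m x] unfolding LL_def by simp
qed


theorem mainTheorem8:
  fixes n :: nat and x :: complex
  assumes "n \<ge> 2"
  shows "cube_poly n x =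
    ((1 + csqrt (5 + 4 * x)) / 2) ^ n + ((1 - csqrt (5 + 4 * x)) / 2) ^ n"
  using final[OF assms] .

end
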